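(* Let $n\ge 2$, $m=qn$ with $q$ a positive integer, $m\ge 2n$ and $\frac{n\log m}{m^{1-1/n}}\le\frac1{16}$. Let $\pi_1,\dots,\pi_n$ be independent uniformly random orderings of the items, run Round-Robin, and fix an agent $i$. Let $L$ be the set of the $\lceil 3n\log m\rceil+(n-1)$ items ranked lowest in $\pi_i$. Then $$\Pr[b_{iq}\in L]\le 2\left(\frac{8n\log m}{m^{1-1/n}}\right)^{n+1-i}.$$
   Context: Logarithms are natural. Round-Robin: agents take turns in order $1,\dots,n,1,\dots,n,\dots$; on her turn agent $i$ takes the unallocated item ranked highest in $\pi_i$, until all items are allocated, giving bundles $A_1,\dots,A_n$ of size $q$. $b_{iq}$ denotes the worst item (according to $\pi_i$) in agent $i$'s bundle $A_i$, i.e. the last item agent $i$ picks. *)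

theory Defs
  imports "HOL-Probability.Probability" "HOL-Combinatorics.Multiset_Permutations"
begin

text \<open>Items are 0..<m; agents are 1..n. A preference ordering of agent a is a list
  (a permutation of the items), the head being the most preferred item.\<close>

fun rr_remaining :: "(nat \<Rightarrow> nat list) \<Rightarrow> nat \<Rightarrow> nat \<Rightarrow> nat \<Rightarrow> nat set" where
  "rr_remaining P n m 0 = {0..<m}"
| "rr_remaining P n m (Suc k) =
     (let R = rr_remaining P n m k
      in R - {hd (filter (\<lambda>x. x \<in> R) (P (k mod n + 1)))})"

definition rr_pick :: "(nat \<Rightarrow> nat list) \<Rightarrow> nat \<Rightarrow> nat \<Rightarrow> nat \<Rightarrow> nat" where
  "rr_pick P n m k = hd (filter (\<lambda>x. x \<in> rr_remaining P n m k) (P (k mod n + 1)))"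

definition rr_bundle :: "(nat \<Rightarrow> nat list) \<Rightarrow> nat \<Rightarrow> nat \<Rightarrow> nat \<Rightarrow> nat set" where
  "rr_bundle P n m i = {rr_pick P n m k | k. k < m \<and> k mod n + 1 = i}"

definition rank :: "nat list \<Rightarrow> nat \<Rightarrow> nat" where
  "rank l x = (LEAST j. j < length l \<and> l ! j = x)"

definition rr_worst :: "(nat \<Rightarrow> nat list) \<Rightarrow> nat \<Rightarrow> nat \<Rightarrow> nat \<Rightarrow> nat" where
  "rr_worst P n m i = (ARG_MAX (rank (P i)) x. x \<in> rr_bundle P n m i)"

definition lowest :: "nat list \<Rightarrow> nat \<Rightarrow> nat set" where
  "lowest l s = set (drop (length l - s) l)"

definition profiles :: "nat \<Rightarrow> nat \<Rightarrow> (nat \<Rightarrow> nat list) set" where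
  "profiles n m = PiE {1..n} (\<lambda>_. permutations_of_set {0..<m})"

end

theory Submission
  imports Defs
begin

fun walk :: "(nat set \<Rightarrow> nat set) list \<Rightarrow> nat set \<Rightarrow> nat list \<Rightarrow> nat" where
  "walk Fs R [] = 0"
| "walk [] R (x#xs) = (if x \<in> R then length xs else walk [] R xs)"
| "walk (F#Fs) R (x#xs) = (if x \<in> R then walk Fs (F (R - {x})) xs else walk (F#Fs) R xs)"

definition cc :: "nat \<Rightarrow> nat \<Rightarrow> nat \<Rightarrow> real" where
  "cc a n k = (\<Prod>j\<in>{1..k}. real (a + j*n) / real (j*n))"

lemma cc_0[simp]: "cc a n 0 = 1" by (simp add: cc_def)

lemma cc_Suc: "cc a n (Suc k) = cc a n k * (real (a + Suc k * n) / real (Suc k * n))"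
  by (simp add: cc_def prod.nat_ivl_Suc' algebra_simps)

lemma cc_ge1: "n \<ge> 1 \<Longrightarrow> cc a n k \<ge> 1"
  unfolding cc_def by (rule prod_ge_1) (auto simp: divide_simps)

lemma card_perm_split:
  assumes "finite X" "X \<noteq> {}"
  shows "card {p \<in> permutations_of_set X. Q p} =
         (\<Sum>x\<in>X. card {xs \<in> permutations_of_set (X - {x}). Q (x#xs)})"
proof -
  have "{p \<in> permutations_of_set X. Q p} =
        (\<Union>x\<in>X. (\<lambda>xs. x # xs) ` {xs \<in> permutations_of_set (X - {x}). Q (x#xs)})"
    using permutations_of_set_nonempty[OF assms(2)] by auto
  moreover have "card (\<Union>x\<in>X. (\<lambda>xs. x # xs) ` {xs \<in> permutations_of_set (X - {x}). Q (x#xs)})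
      = (\<Sum>x\<in>X. card ((\<lambda>xs. x # xs) ` {xs \<in> permutations_of_set (X - {x}). Q (x#xs)}))"
    by (rule card_UN_disjoint) (use assms in auto)
  moreover have "\<And>x. card ((\<lambda>xs. x # xs) ` {xs \<in> permutations_of_set (X - {x}). Q (x#xs)})
       = card {xs \<in> permutations_of_set (X - {x}). Q (x#xs)}"
    by (rule card_image) (auto simp: inj_on_def)
  ultimately show ?thesis by simp
qed

lemma walk_notin: "x \<notin> R \<Longrightarrow> walk (replicate k F) R (x#xs) = walk (replicate k F) R xs"
  by (cases k) auto

lemma core:
  assumes finU: "finite U"
    and FP: "\<And>Y. Y \<subseteq> U \<Longrightarrow> n - 1 \<le> card Y \<Longrightarrow> F Y \<subseteq> Y \<and> card (F Y) = card Y - (n - 1)"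
    and n1: "n \<ge> 1" and a1: "a \<ge> 1"
  shows "X \<subseteq> U \<Longrightarrow> R \<subseteq> X \<Longrightarrow> card R = a + k*n \<Longrightarrow>
     real (card {p \<in> permutations_of_set X. walk (replicate k F) R p < s})
       \<le> real (s choose a) * cc a n k / real (card X choose a) * fact (card X)"
proof (induction "card X" arbitrary: X R k)
  case 0
  then have "X = {}" using finU finite_subset by fastforce
  then show ?case using 0 a1 by auto
next
  case (Suc u)
  have finX: "finite X" using Suc.prems finU finite_subset by blast
  have Xne: "X \<noteq> {}" using Suc.hyps(2) by auto
  have finR: "finite R" using finX Suc.prems finite_subset by blast
  define N where "N = card {p \<in> permutations_of_set X. walk (replicate k F) R p < s}"
  have Nle0: "N \<le> fact (Suc u)"
  proof -
    have "N \<le> card (permutations_of_set X)" unfolding N_def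
      by (rule card_mono) auto
    then show ?thesis using finX Suc.hyps(2) by simp
  qed
  have Nle: "real N \<le> fact (Suc u)" using Nle0 by (metis of_nat_fact of_nat_le_iff)
  have aR: "a \<le> card R" using Suc.prems by simp
  have RX: "card R \<le> Suc u" using card_mono[OF finX Suc.prems(2)] Suc.hyps(2) by simp
  show ?case
  proof (cases "Suc u \<le> s")
    case True
    have "real (Suc u choose a) \<le> real (s choose a)" using binomial_right_mono[OF True] by simp
    moreover have "real (Suc u choose a) > 0" using aR RX by simp
    ultimately have "1 \<le> real (s choose a) / real (Suc u choose a)" by simp
    then have "1 \<le> real (s choose a) * cc a n k / real (Suc u choose a)"
      using cc_ge1[OF n1, of a k] 
      by (smt (verit) divide_nonneg_nonneg mult_le_cancel_right1 of_nat_0_le_iff times_divide_eq_left)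
    then have "1 * (fact (Suc u)::real) \<le> real (s choose a) * cc a n k / real (Suc u choose a) * fact (Suc u)"
      by (intro mult_right_mono) auto
    then have "real N \<le> real (s choose a) * cc a n k / real (Suc u choose a) * fact (Suc u)"
      using Nle by linarith
    then show ?thesis using Suc.hyps(2) unfolding N_def by simp
  next
    case False
    define B where "B k' = real (s choose a) * cc a n k' / real (u choose a) * fact u" for k'
    have ind: "card {xs \<in> permutations_of_set (X - {x}). walk (replicate k F) R (x#xs) < s}
                 \<le> B k" if "x \<in> X - R" for x
    proof -
      have eq: "card {xs \<in> permutations_of_set (X - {x}). walk (replicate k F) R (x#xs) < s}
          = card {xs \<in> permutations_of_set (X - {x}). walk (replicate k F) R xs < s}"
        using that walk_notin by simp
      have cx: "card (X - {x}) = u" using finX Suc.hyps(2) that by simp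
      have "real (card {xs \<in> permutations_of_set (X - {x}). walk (replicate k F) R xs < s})
         \<le> real (s choose a) * cc a n k / real (card (X - {x}) choose a) * fact (card (X - {x}))"
        by (rule Suc.hyps(1)[of "X - {x}" R k]) (use Suc.prems that cx in auto)
      also have "\<dots> = B k" unfolding B_def cx ..
      finally show ?thesis using eq by simp
    qed
    have inR: "card {xs \<in> permutations_of_set (X - {x}). walk (replicate k F) R (x#xs) < s}
                 \<le> (if k = 0 then 0 else B (k - 1))" if "x \<in> R" for x
    proof (cases k)
      case 0
      have "{xs \<in> permutations_of_set (X - {x}). walk (replicate k F) R (x#xs) < s} = {}"
        using 0 that False finX Suc.hyps(2) Suc.prems(2)
        by (auto dest!: length_finite_permutations_of_set)
      then show ?thesis using 0 by simp
    next
      case (Suc k')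
      let ?R' = "F (R - {x})"
      note Sk = Suc
      have c1: "card (R - {x}) = a + k*n - 1" using that finR Suc.prems by simp
      have FR: "?R' \<subseteq> R - {x} \<and> card ?R' = card (R - {x}) - (n - 1)"
        by (rule FP) (use Suc.prems c1 Suc n1 in auto)
      have cR': "card ?R' = a + k' * n" using FR c1 Suc n1 by simp
      have eq: "card {xs \<in> permutations_of_set (X - {x}). walk (replicate k F) R (x#xs) < s}
          = card {xs \<in> permutations_of_set (X - {x}). walk (replicate k' F) ?R' xs < s}"
        using that Suc by simp
      have cx: "card (X - {x}) = u" using finX Suc.hyps(2) that Suc.prems(2) by auto
      have "real (card {xs \<in> permutations_of_set (X - {x}). walk (replicate k' F) ?R' xs < s})
         \<le> real (s choose a) * cc a n k' / real (card (X - {x}) choose a) * fact (card (X - {x}))"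
        by (rule Suc.hyps(1)[of "X - {x}" ?R' k']) (use Suc.prems that cx FR cR' in auto)
      also have "\<dots> = B k'" unfolding B_def cx ..
      finally show ?thesis using eq Suc by simp
    qed
    have "real N = (\<Sum>x\<in>X. real (card {xs \<in> permutations_of_set (X - {x}). walk (replicate k F) R (x#xs) < s}))"
      unfolding N_def by (simp add: card_perm_split[OF finX Xne])
    also have "\<dots> = (\<Sum>x\<in>X - R. real (card {xs \<in> permutations_of_set (X - {x}). walk (replicate k F) R (x#xs) < s}))
                  + (\<Sum>x\<in>R. real (card {xs \<in> permutations_of_set (X - {x}). walk (replicate k F) R (x#xs) < s}))"
      using sum.subset_diff[OF Suc.prems(2) finX] by simp
    also have "\<dots> \<le> (\<Sum>x\<in>X - R. B k) + (\<Sum>x\<in>R. (if k = 0 then 0 else B (k - 1)))"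
      by (intro add_mono sum_mono ind inR) auto
    also have "\<dots> = real (Suc u - (a + k*n)) * B k + real (a + k*n) * (if k = 0 then 0 else B (k - 1))"
      using card_Diff_subset[OF finR Suc.prems(2)] Suc.hyps(2) Suc.prems(3) by simp
    also have "\<dots> \<le> real (s choose a) * cc a n k / real (Suc u choose a) * fact (Suc u)"
    proof (cases "a \<le> s")
      case False2: False
      then have "s choose a = 0" by simp
      then show ?thesis unfolding B_def by (simp del: binomial_eq_0_iff)
    next
      case True
      have au: "a \<le> u" using True False by simp
      have abs: "real (Suc u - a) * real (Suc u choose a) = real (Suc u) * real (u choose a)"
        using binomial_absorb_comp[of "Suc u" a] by (metis diff_Suc_1 of_nat_mult)
      have pos: "real (u choose a) > 0" "real (Suc u choose a) > 0" using au by auto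
      have key: "real (Suc u - (a + k*n)) * cc a n k + real (a + k*n) * (if k = 0 then 0 else cc a n (k - 1))
                 = real (Suc u - a) * cc a n k"
      proof (cases k)
        case 0 then show ?thesis by simp
      next
        case (Suc k')
        have nz: "real n + real k' * real n \<noteq> 0" using n1 by (smt (verit) of_nat_0_le_iff of_nat_le_iff of_nat_1 mult_nonneg_nonneg)
        have A: "real (a + k*n) * cc a n k' = real (k * n) * cc a n k"
          using Suc n1 nz by (simp add: cc_Suc field_simps)
        have B: "real (Suc u - (a + k*n)) = real (Suc u - a) - real (k*n)"
          using RX Suc.prems(3) by simp
        have "real (Suc u - (a + k*n)) * cc a n k + real (a + k*n) * (if k = 0 then 0 else cc a n (k - 1))
            = real (Suc u - (a + k*n)) * cc a n k + real (a + k*n) * cc a n k'" using Suc by simp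
        also have "\<dots> = (real (Suc u - a) - real (k*n)) * cc a n k + real (k * n) * cc a n k"
          using A B by simp
        also have "\<dots> = real (Suc u - a) * cc a n k" by (simp add: algebra_simps)
        finally show ?thesis .
      qed
      have "real (Suc u - (a + k*n)) * B k + real (a + k*n) * (if k = 0 then 0 else B (k - 1))
          = real (s choose a) * fact u / real (u choose a) *
             (real (Suc u - (a + k*n)) * cc a n k + real (a + k*n) * (if k = 0 then 0 else cc a n (k - 1)))"
        unfolding B_def by (simp add: algebra_simps)
      also have "\<dots> = real (s choose a) * fact u / real (u choose a) * (real (Suc u - a) * cc a n k)"
        using key by simp
      also have "\<dots> = real (s choose a) * fact u * cc a n k * (real (Suc u - a) / real (u choose a))"
        by simp
      also have "real (Suc u - a) / real (u choose a) = real (Suc u) / real (Suc u choose a)"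
        using abs pos by (simp add: field_simps)
      also have "real (s choose a) * fact u * cc a n k * (real (Suc u) / real (Suc u choose a))
          = real (s choose a) * cc a n k / real (Suc u choose a) * fact (Suc u)"
        by (simp add: fact_Suc algebra_simps)
      finally show ?thesis by simp
    qed
    finally show ?thesis using Suc.hyps(2) unfolding N_def by simp
  qed
qed

definition st :: "(nat \<Rightarrow> nat list) \<Rightarrow> nat \<Rightarrow> nat \<Rightarrow> nat set \<Rightarrow> nat set" where
  "st P n k Y = Y - {hd (filter (\<lambda>x. x \<in> Y) (P (k mod n + 1)))}"

fun its :: "(nat \<Rightarrow> nat list) \<Rightarrow> nat \<Rightarrow> nat \<Rightarrow> nat \<Rightarrow> nat set \<Rightarrow> nat set" where
  "its P n k 0 Y = Y"
| "its P n k (Suc d) Y = its P n (Suc k) d (st P n k Y)"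

lemma rem_Suc: "rr_remaining P n m (Suc k) = st P n k (rr_remaining P n m k)"
  by (simp add: st_def Let_def)

lemma rem_add: "rr_remaining P n m (k + d) = its P n k d (rr_remaining P n m k)"
proof (induction d arbitrary: k)
  case 0 then show ?case by simp
next
  case (Suc d)
  have "rr_remaining P n m (k + Suc d) = rr_remaining P n m (Suc k + d)" by (simp only: add_Suc add_Suc_right)
  also have "\<dots> = its P n (Suc k) d (rr_remaining P n m (Suc k))" by (rule Suc.IH)
  also have "\<dots> = its P n k (Suc d) (rr_remaining P n m k)" by (simp only: rem_Suc its.simps)
  finally show ?case .
qed

lemma st_period: "st P n (k + n) = st P n k"
  by (simp add: st_def fun_eq_iff)

lemma its_period: "its P n (k + n) d Y = its P n k d Y"
proof (induction d arbitrary: k Y)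
  case 0 then show ?case by simp
next
  case (Suc d)
  have "its P n (k + n) (Suc d) Y = its P n (Suc k + n) d (st P n k Y)"
    by (simp add: st_period)
  also have "\<dots> = its P n k (Suc d) Y" using Suc.IH[of "Suc k" "st P n k Y"] by simp
  finally show ?case .
qed

lemma its_period_mult: "its P n (k + j*n) d Y = its P n k d Y"
proof (induction j)
  case 0 then show ?case by simp
next
  case (Suc j)
  have "k + Suc j * n = (k + j*n) + n" by simp
  then show ?case using Suc its_period by metis
qed

lemma its_sub: "its P n k d Y \<subseteq> Y"
proof (induction d arbitrary: k Y)
  case 0 then show ?case by simp
next
  case (Suc d)
  then show ?case using Suc.IH[of "Suc k" "st P n k Y"] by (auto simp: st_def)
qed

lemma hd_filter_in:
  assumes "Y \<inter> set l \<noteq> {}"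
  shows "hd (filter (\<lambda>x. x \<in> Y) l) \<in> Y"
proof -
  have "filter (\<lambda>x. x \<in> Y) l \<noteq> []" using assms by (auto simp: filter_empty_conv)
  then have "hd (filter (\<lambda>x. x \<in> Y) l) \<in> set (filter (\<lambda>x. x \<in> Y) l)" by (rule hd_in_set)
  then show ?thesis by simp
qed

lemma its_card:
  assumes "\<forall>j\<in>{1..n}. set (P j) = U" "n > 0"
  shows "Y \<subseteq> U \<Longrightarrow> finite Y \<Longrightarrow> d \<le> card Y \<Longrightarrow> card (its P n k d Y) = card Y - d"
proof (induction d arbitrary: k Y)
  case 0 then show ?case by simp
next
  case (Suc d)
  have Yne: "Y \<noteq> {}" using Suc.prems by auto
  have "k mod n + 1 \<in> {1..n}" using assms(2) by (simp add: Suc_leI)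
  then have "set (P (k mod n + 1)) = U" using assms(1) by blast
  then have "Y \<inter> set (P (k mod n + 1)) \<noteq> {}" using Suc.prems Yne by auto
  then have h: "hd (filter (\<lambda>x. x \<in> Y) (P (k mod n + 1))) \<in> Y" by (rule hd_filter_in)
  have c: "card (st P n k Y) = card Y - 1" unfolding st_def using h Suc.prems by simp
  have "card (its P n (Suc k) d (st P n k Y)) = card (st P n k Y) - d"
    by (rule Suc.IH) (use Suc.prems c in \<open>auto simp: st_def\<close>)
  then show ?case using c by simp
qed

lemma rem_sub_card:
  assumes "\<forall>j\<in>{1..n}. set (P j) = {0..<m}" "n > 0" "k \<le> m"
  shows "rr_remaining P n m k \<subseteq> {0..<m}" "card (rr_remaining P n m k) = m - k"
proof -
  have e: "rr_remaining P n m k = its P n 0 k {0..<m}" using rem_add[of P n m 0 k] by simp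
  show "rr_remaining P n m k \<subseteq> {0..<m}" unfolding e by (rule its_sub)
  show "card (rr_remaining P n m k) = m - k" unfolding e
    using its_card[OF assms(1,2), of "{0..<m}" k 0] assms(3) by simp
qed

lemma its_indep:
  "(\<forall>k'. k \<le> k' \<and> k' < k + d \<longrightarrow> P (k' mod n + 1) = P' (k' mod n + 1)) \<Longrightarrow>
    its P n k d Y = its P' n k d Y"
proof (induction d arbitrary: k Y)
  case 0 then show ?case by simp
next
  case (Suc d)
  have "st P n k Y = st P' n k Y" using Suc.prems by (simp add: st_def)
  moreover have "its P n (Suc k) d Z = its P' n (Suc k) d Z" for Z
    by (rule Suc.IH) (use Suc.prems in auto)
  ultimately show ?case by simp
qed

lemma rem_indep:
  assumes "\<forall>k'<k. P (k' mod n + 1) = P' (k' mod n + 1)"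
  shows "rr_remaining P n m k = rr_remaining P' n m k"
proof -
  have e: "rr_remaining Q n m k = its Q n 0 k {0..<m}" for Q using rem_add[of Q n m 0 k] by simp
  show ?thesis unfolding e by (rule its_indep) (use assms in auto)
qed

lemma walk_notin_gen: "x \<notin> R \<Longrightarrow> walk Fs R (x#xs) = walk Fs R xs"
  by (cases Fs) auto

lemma rank_nth: "distinct l \<Longrightarrow> j < length l \<Longrightarrow> rank l (l ! j) = j"
  unfolding rank_def
  by (rule Least_equality) (auto simp: nth_eq_iff_index_eq)

lemma rank_in: "y \<in> set l \<Longrightarrow> rank l y < length l \<and> l ! rank l y = y"
  unfolding rank_def
  by (rule LeastI_ex) (auto simp: in_set_conv_nth)

lemma in_drop_rank:
  assumes "distinct l" "y \<in> set l"
  shows "y \<in> set (drop d l) \<longleftrightarrow> d \<le> rank l y"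
proof -
  obtain r where r: "r < length l" "l ! r = y" "rank l y = r"
    using rank_in[OF assms(2)] by blast
  show ?thesis
  proof
    assume "y \<in> set (drop d l)"
    then obtain j where j: "j < length l - d" "drop d l ! j = y" by (auto simp: in_set_conv_nth)
    then have "l ! (d + j) = l ! r" "d + j < length l" using r by auto
    then have "d + j = r" using assms(1) r(1) by (simp add: nth_eq_iff_index_eq)
    then show "d \<le> rank l y" using r by simp
  next
    assume "d \<le> rank l y"
    then have "drop d l ! (r - d) = y" "r - d < length (drop d l)" using r by auto
    then show "y \<in> set (drop d l)" by (metis nth_mem)
  qed
qed

lemma walk_skip:
  assumes "\<forall>j<kx. l ! j \<notin> R" "kx \<le> length l"
  shows "p \<le> kx \<Longrightarrow> walk Fs R (drop p l) = walk Fs R (drop kx l)"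
proof (induction "kx - p" arbitrary: p)
  case 0 then show ?case by simp
next
  case (Suc t)
  have pl: "p < length l" "p < kx" using Suc.hyps(2) assms(2) by auto
  have "drop p l = l ! p # drop (Suc p) l" using pl by (simp add: Cons_nth_drop_Suc)
  then have "walk Fs R (drop p l) = walk Fs R (drop (Suc p) l)"
    using assms(1) pl walk_notin_gen by simp
  also have "\<dots> = walk Fs R (drop kx l)" using Suc.hyps pl by simp
  finally show ?case .
qed

lemma LS:
  assumes dist: "distinct l" and tk: "\<forall>y\<in>set (take p l). y \<notin> R" and ex: "\<exists>y\<in>set (drop p l). y \<in> R"
  defines "kx \<equiv> length (takeWhile (\<lambda>y. y \<notin> R) l)"
  shows "kx < length l" "l ! kx = hd (filter (\<lambda>y. y \<in> R) l)" "l ! kx \<in> R" "p \<le> kx"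
    "\<forall>j<kx. l ! j \<notin> R" "rank l (l ! kx) = kx"
    "walk (F#Fs) R (drop p l) = walk Fs (F (R - {l ! kx})) (drop (Suc kx) l)"
    "walk [] R (drop p l) = length l - Suc kx"
proof -
  have exl: "\<exists>y\<in>set l. y \<in> R" using ex by (meson in_set_dropD)
  show bef: "\<forall>j<kx. l ! j \<notin> R"
  proof (intro allI impI)
    fix j assume "j < kx"
    then have "takeWhile (\<lambda>y. y \<notin> R) l ! j = l ! j" unfolding kx_def by (rule takeWhile_nth)
    moreover have "takeWhile (\<lambda>y. y \<notin> R) l ! j \<in> set (takeWhile (\<lambda>y. y \<notin> R) l)"
      using \<open>j < kx\<close> unfolding kx_def by simp
    ultimately show "l ! j \<notin> R" using set_takeWhileD by metis
  qed
  show kl: "kx < length l"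
  proof (rule ccontr)
    assume "\<not> kx < length l"
    then have "\<forall>y\<in>set l. y \<notin> R" using bef by (auto simp: in_set_conv_nth)
    then show False using exl by blast
  qed
  show kR: "l ! kx \<in> R" using nth_length_takeWhile[of "\<lambda>y. y \<notin> R" l] kl unfolding kx_def by simp
  show "p \<le> kx"
  proof (rule ccontr)
    assume "\<not> p \<le> kx"
    then have "l ! kx \<in> set (take p l)" using kl by (auto simp: in_set_conv_nth intro!: exI[of _ kx])
    then show False using tk kR by blast
  qed
  have dw: "dropWhile (\<lambda>y. y \<notin> R) l = l ! kx # drop (Suc kx) l"
    using kl by (simp add: dropWhile_eq_drop kx_def Cons_nth_drop_Suc)
  have "filter (\<lambda>y. y \<in> R) (takeWhile (\<lambda>y. y \<notin> R) l) = []"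
    by (auto simp: filter_empty_conv dest: set_takeWhileD)
  then have "filter (\<lambda>y. y \<in> R) l = filter (\<lambda>y. y \<in> R) (dropWhile (\<lambda>y. y \<notin> R) l)"
    by (metis append_Nil filter_append takeWhile_dropWhile_id)
  then show "l ! kx = hd (filter (\<lambda>y. y \<in> R) l)" using dw kR by simp
  show "rank l (l ! kx) = kx" using rank_nth[OF dist kl] .
  have dk: "drop kx l = l ! kx # drop (Suc kx) l" using kl by (simp add: Cons_nth_drop_Suc)
  show "walk (F#Fs) R (drop p l) = walk Fs (F (R - {l ! kx})) (drop (Suc kx) l)"
    using walk_skip[OF bef, of p "F#Fs"] kl \<open>p \<le> kx\<close> dk kR by simp
  show "walk [] R (drop p l) = length l - Suc kx"
    using walk_skip[OF bef, of p "[]"] kl \<open>p \<le> kx\<close> dk kR by simp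
qed

lemma chain_main:
  fixes P :: "nat \<Rightarrow> nat list" and n m q i s :: nat
  assumes n: "n \<ge> 2" and i1: "1 \<le> i" and i2: "i \<le> n" and m: "m = q * n" and q: "q > 0"
    and prof: "\<forall>j\<in>{1..n}. set (P j) = {0..<m}" and dist: "distinct (P i)"
  shows "rr_worst P n m i \<in> lowest (P i) s \<longleftrightarrow>
         walk (replicate (q-1) (its P n i (n-1))) (rr_remaining P n m (i-1)) (P i) < s"
proof -
  define l where "l = P i"
  define t where "t j = j*n + (i-1)" for j
  define R where "R j = rr_remaining P n m (t j)" for j
  define x where "x j = rr_pick P n m (t j)" for j
  define F where "F = its P n i (n-1)"
  have setl: "set l = {0..<m}" using prof i1 i2 unfolding l_def by auto
  have distl: "distinct l" using dist unfolding l_def .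
  have len: "length l = m" using distinct_card[OF distl] setl by simp
  have npos: "n > 0" using n by simp
  have tm: "t j < m" if "j < q" for j
  proof -
    have "Suc j * n \<le> q * n" using that by (intro mult_le_mono1) simp
    then show ?thesis unfolding t_def m using i2 i1 by simp
  qed
  have tmod: "t j mod n + 1 = i" for j
  proof -
    have "t j mod n = (i - 1) mod n" unfolding t_def by (simp add: add.commute)
    also have "\<dots> = i - 1" using i1 i2 by simp
    finally show ?thesis using i1 by simp
  qed
  have xj: "x j = hd (filter (\<lambda>y. y \<in> R j) l)" for j
    unfolding x_def rr_pick_def R_def l_def using tmod[of j] by simp
  have Rsub: "R j \<subseteq> {0..<m}" if "j < q" for j
    unfolding R_def using rem_sub_card(1)[OF prof npos] tm[OF that] by simp
  have Rcard: "card (R j) = m - t j" if "j < q" for j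
    unfolding R_def using rem_sub_card(2)[OF prof npos] tm[OF that] by simp
  have Rnext: "R (Suc j) = F (R j - {x j})" for j
  proof -
    have "t (Suc j) = t j + n" unfolding t_def by simp
    then have "R (Suc j) = its P n (t j) n (R j)" unfolding R_def by (simp add: rem_add)
    also have "\<dots> = its P n (Suc (t j)) (n - 1) (st P n (t j) (R j))"
      using npos by (cases n) simp_all
    also have "st P n (t j) (R j) = R j - {x j}"
      unfolding st_def x_def rr_pick_def R_def using tmod[of j] by simp
    also have "Suc (t j) = i + j * n" unfolding t_def using i1 by simp
    also have "its P n (i + j * n) (n - 1) (R j - {x j}) = F (R j - {x j})"
      unfolding F_def by (rule its_period_mult)
    finally show ?thesis .
  qed
  define pp where "pp j = (if j = 0 then 0 else Suc (rank l (x (j-1))))" for j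
  have S: "pp j \<le> rank l (x j) \<and> rank l (x j) < m \<and> x j \<in> set l \<and>
      (\<forall>y\<in>set (take (Suc (rank l (x j))) l). y \<notin> R (Suc j)) \<and>
      walk (F#Fs) (R j) (drop (pp j) l) = walk Fs (R (Suc j)) (drop (Suc (rank l (x j))) l) \<and>
      walk [] (R j) (drop (pp j) l) = m - Suc (rank l (x j))"
    if jq: "j < q" and tk: "\<forall>y\<in>set (take (pp j) l). y \<notin> R j" for j Fs
  proof -
    have "card (R j) > 0" using Rcard[OF jq] tm[OF jq] by simp
    then obtain y where y: "y \<in> R j" by (metis card_gt_0_iff ex_in_conv)
    then have "y \<in> set l" using Rsub[OF jq] setl by auto
    then have "y \<in> set (take (pp j) l) \<or> y \<in> set (drop (pp j) l)"
      by (metis Un_iff append_take_drop_id set_append)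
    then have ex: "\<exists>y\<in>set (drop (pp j) l). y \<in> R j" using tk y by blast
    define kx where "kx = length (takeWhile (\<lambda>y. y \<notin> R j) l)"
    note L = LS[OF distl tk ex, folded kx_def]
    have xk: "x j = l ! kx" using L(2) xj by simp
    have rk: "rank l (x j) = kx" using L(6) xk by simp
    have xin: "x j \<in> set l" using L(1) xk by simp
    have take_dis: "\<forall>y\<in>set (take (Suc kx) l). y \<notin> R (Suc j)"
    proof
      fix y assume "y \<in> set (take (Suc kx) l)"
      then obtain j' where j': "j' < Suc kx" "j' < length l" "l ! j' = y"
        by (auto simp: in_set_conv_nth)
      have sub: "R (Suc j) \<subseteq> R j - {x j}" unfolding Rnext F_def by (rule its_sub)
      show "y \<notin> R (Suc j)"
      proof (cases "j' = kx")
        case True then show ?thesis using sub j' xk by auto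
      next
        case False then have "j' < kx" using j' by simp
        then show ?thesis using L(5) sub j' by auto
      qed
    qed
    show ?thesis using L rk xin take_dis len xk Rnext by simp
  qed
  have A: "(\<forall>y\<in>set (take (pp j) l). y \<notin> R j) \<and>
           walk (replicate (q-1) F) (R 0) l = walk (replicate (q-1-j) F) (R j) (drop (pp j) l)"
    if "j < q" for j
    using that
  proof (induction j)
    case 0 then show ?case by (simp add: pp_def)
  next
    case (Suc j)
    then have jq: "j < q" by simp
    have IH: "(\<forall>y\<in>set (take (pp j) l). y \<notin> R j)"
      "walk (replicate (q-1) F) (R 0) l = walk (replicate (q-1-j) F) (R j) (drop (pp j) l)"
      using Suc by auto
    have rep: "replicate (q-1-j) F = F # replicate (q-1-Suc j) F"
      using Suc.prems by (simp add: replicate_Suc[symmetric] Suc_diff_Suc)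
    have ppS: "pp (Suc j) = Suc (rank l (x j))" by (simp add: pp_def)
    show ?case using S[OF jq IH(1), of "replicate (q-1-Suc j) F"] IH(2) rep ppS by simp
  qed
  have mono: "rank l (x j) < rank l (x (Suc j))" if "Suc j < q" for j
  proof -
    have "pp (Suc j) \<le> rank l (x (Suc j))" using S[OF that conjunct1[OF A[OF that]]] by simp
    then show ?thesis by (simp add: pp_def)
  qed
  have mono2: "j + d \<le> q - 1 \<Longrightarrow> rank l (x j) \<le> rank l (x (j + d))" for j d
  proof (induction d)
    case 0 then show ?case by simp
  next
    case (Suc d)
    then have "rank l (x (j + d)) < rank l (x (Suc (j + d)))" using mono[of "j + d"] by simp
    then show ?case using Suc by simp
  qed
  have qq: "q - 1 < q" using q by simp
  have fin: "walk (replicate (q-1) F) (R 0) l = m - Suc (rank l (x (q-1)))"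
    using A[OF qq] S[OF qq conjunct1[OF A[OF qq]], of "[]"] by simp
  have Sx: "rank l (x j) < m \<and> x j \<in> set l" if "j < q" for j
    using S[OF that conjunct1[OF A[OF that]]] by simp
  have bnd: "rr_bundle P n m i = x ` {..<q}"
  proof (rule set_eqI, rule iffI)
    fix y assume "y \<in> rr_bundle P n m i"
    then obtain k where k: "k < m" "k mod n + 1 = i" "y = rr_pick P n m k"
      unfolding rr_bundle_def by blast
    have "k mod n = i - 1" using k(2) by simp
    then have kd: "t (k div n) = k" unfolding t_def using div_mult_mod_eq[of k n] by simp
    have "k div n < q" using k(1) m npos by (simp add: div_less_iff_less_mult)
    moreover have "x (k div n) = y" unfolding x_def using kd k(3) by simp
    ultimately show "y \<in> x ` {..<q}" by blast
  next
    fix y assume "y \<in> x ` {..<q}"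
    then obtain j where "j < q" "y = x j" by auto
    then show "y \<in> rr_bundle P n m i" unfolding rr_bundle_def x_def using tm tmod by blast
  qed
  define w where "w = rr_worst P n m i"
  have wdef: "w = arg_max (rank l) (\<lambda>y. y \<in> x ` {..<q})"
    unfolding w_def rr_worst_def bnd l_def by simp
  have am: "(w \<in> x ` {..<q}) \<and> (\<forall>y. y \<in> x ` {..<q} \<longrightarrow> rank l y \<le> rank l w)"
    unfolding wdef by (rule arg_max_nat_lemma[where k = "x (q-1)" and b = m]) (use qq Sx in auto)
  have rw: "rank l w = rank l (x (q-1))"
  proof -
    obtain j where j: "j < q" "w = x j" using am by auto
    have "rank l (x j) \<le> rank l (x (q-1))" using mono2[of j "q-1-j"] j by simp
    moreover have "rank l (x (q-1)) \<le> rank l w" using am qq by auto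
    ultimately show ?thesis using j by simp
  qed
  have win: "w \<in> set l" using am Sx by auto
  have "w \<in> lowest l s \<longleftrightarrow> m - s \<le> rank l w"
    unfolding lowest_def len using in_drop_rank[OF distl win] by simp
  moreover have "rank l (x (q-1)) < m" using Sx qq by simp
  ultimately have E1: "rr_worst P n m i \<in> lowest (P i) s \<longleftrightarrow> m - s \<le> rank l (x (q-1))"
    "rank l (x (q-1)) < m" using rw unfolding w_def l_def by auto
  have R0: "R 0 = rr_remaining P n m (i-1)" by (simp add: R_def t_def)
  have E2: "walk (replicate (q-1) (its P n i (n-1))) (rr_remaining P n m (i-1)) (P i) = m - Suc (rank l (x (q-1)))"
    using fin R0 unfolding F_def l_def by simp
  show ?thesis unfolding E1(1) E2 using E1(2) by arith
qed

lemma binom_ratio: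
  fixes s m a :: nat
  shows "s \<le> m \<Longrightarrow> real (s choose a) / real (m choose a) \<le> (real s / real m) ^ a"
proof (induction a arbitrary: s m)
  case 0 then show ?case by simp
next
  case (Suc a)
  show ?case
  proof (cases "s = 0")
    case True then show ?thesis by simp
  next
    case False
    then have s1: "s \<ge> 1" and m1: "m \<ge> 1" using Suc.prems by auto
    have es: "real (s choose Suc a) = real s * real ((s - 1) choose a) / real (Suc a)"
    proof -
      have "real (Suc a) * real (s choose Suc a) = real s * real ((s - 1) choose a)"
        using binomial_absorption[of a s] by (metis of_nat_mult)
      then show ?thesis by (simp only: eq_divide_eq) (simp add: mult.commute)
    qed
    have em: "real (m choose Suc a) = real m * real ((m - 1) choose a) / real (Suc a)"
    proof -
      have "real (Suc a) * real (m choose Suc a) = real m * real ((m - 1) choose a)"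
        using binomial_absorption[of a m] by (metis of_nat_mult)
      then show ?thesis by (simp only: eq_divide_eq) (simp add: mult.commute)
    qed
    have ratio: "real (s choose Suc a) / real (m choose Suc a)
        = (real s / real m) * (real ((s - 1) choose a) / real ((m - 1) choose a))"
    proof -
      have gen: "(x / c) / (y / c) = x / y" if "c \<noteq> 0" for x y c :: real
        using that by (cases "y = 0") (simp_all add: field_simps)
      show ?thesis unfolding es em gen[of "real (Suc a)", OF of_nat_neq_0] by simp
    qed
    have IH: "real ((s - 1) choose a) / real ((m - 1) choose a) \<le> (real (s - 1) / real (m - 1)) ^ a"
      using Suc.IH[of "s - 1" "m - 1"] Suc.prems by simp
    have le: "real (s - 1) / real (m - 1) \<le> real s / real m"
    proof (cases "m = 1")
      case True then show ?thesis by simp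
    next
      case False
      then have "real m - 1 > 0" using m1 by simp
      moreover have "real m * (real s - 1) \<le> real s * (real m - 1)" using Suc.prems by (simp add: algebra_simps)
      ultimately show ?thesis using s1 m1 by (simp add: of_nat_diff field_simps)
    qed
    have "(real (s - 1) / real (m - 1)) ^ a \<le> (real s / real m) ^ a"
      by (rule power_mono[OF le]) simp
    then have "real ((s - 1) choose a) / real ((m - 1) choose a) \<le> (real s / real m) ^ a"
      using IH by linarith
    then have "(real s / real m) * (real ((s - 1) choose a) / real ((m - 1) choose a))
             \<le> (real s / real m) * (real s / real m) ^ a"
      by (rule mult_left_mono) simp
    then show ?thesis using ratio by simp
  qed
qed

lemma harm_bound: "k \<ge> 1 \<Longrightarrow> (\<Sum>j\<in>{1..k}. 1 / real j) \<le> 1 + ln (real k)"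
proof (induction k rule: dec_induct)
  case base then show ?case by simp
next
  case (step k)
  have k0: "real k > 0" using step by simp
  have "ln (real k / real (Suc k)) \<le> real k / real (Suc k) - 1"
    by (rule ln_le_minus_one) (use k0 in simp)
  then have "ln (real k) - ln (real (Suc k)) \<le> - 1 / real (Suc k)"
    using k0 by (simp add: ln_div field_simps)
  then have "1 / real (Suc k) \<le> ln (real (Suc k)) - ln (real k)" by (simp add: field_simps)
  then show ?case using step by (simp add: sum.nat_ivl_Suc')
qed

lemma cc_bound:
  assumes n1: "n \<ge> 1" and k1: "k \<ge> 1"
  shows "cc a n k \<le> exp (real a / real n * (1 + ln (real k)))"
proof -
  have "cc a n k = (\<Prod>j\<in>{1..k}. 1 + real a / real n * (1 / real j))"
    unfolding cc_def using n1 by (intro prod.cong) (auto simp: field_simps)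
  also have "\<dots> \<le> (\<Prod>j\<in>{1..k}. exp (real a / real n * (1 / real j)))"
    by (intro prod_mono) (auto simp: add_nonneg_nonneg)
  also have "\<dots> = exp (\<Sum>j\<in>{1..k}. real a / real n * (1 / real j))"
    by (simp add: exp_sum)
  also have "\<dots> = exp (real a / real n * (\<Sum>j\<in>{1..k}. 1 / real j))"
    by (simp add: sum_distrib_left)
  also have "\<dots> \<le> exp (real a / real n * (1 + ln (real k)))"
    using harm_bound[OF k1] by (intro exp_mono mult_left_mono) auto
  finally show ?thesis .
qed

lemma final_arith:
  fixes n m q i :: nat
  assumes n2: "n \<ge> 2" and q0: "q > 0" and m: "m = q * n" and m2: "m \<ge> 2 * n"
    and hyp: "real n * ln (real m) / real m powr (1 - 1 / real n) \<le> 1 / 16"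
    and i1: "1 \<le> i" and i2: "i \<le> n"
  defines "s \<equiv> nat \<lceil>3 * real n * ln (real m)\<rceil> + (n - 1)" and "a \<equiv> n + 1 - i"
  shows "s \<le> m"
    "real (s choose a) * cc a n (q-1) / real (m choose a)
      \<le> 2 * (8 * real n * ln (real m) / real m powr (1 - 1 / real n)) ^ a"
proof -
  have m4: "real m \<ge> 4" using m2 n2 by simp
  have mpos: "real m > 0" using m4 by simp
  have lnm: "1 \<le> ln (real m)" using ln_ge_iff[OF mpos, of 1] exp_le m4 by simp
  have lnpos: "ln (real m) \<ge> 0" using lnm by simp
  have c0: "3 * real n * ln (real m) \<ge> 0" using lnpos by simp
  have sreal: "real s \<le> 3 * real n * ln (real m) + real n"
  proof -
    have "real (nat \<lceil>3 * real n * ln (real m)\<rceil>) = of_int \<lceil>3 * real n * ln (real m)\<rceil>"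
      using c0 by (simp add: ceiling_le_zero not_le)
    also have "\<dots> \<le> 3 * real n * ln (real m) + 1" by simp
    finally show ?thesis unfolding s_def using n2 by (simp add: of_nat_diff)
  qed
  have s4: "2 * real s \<le> 8 * real n * ln (real m)"
  proof -
    have "real n * 1 \<le> real n * ln (real m)" using lnm by (intro mult_left_mono) auto
    then show ?thesis using sreal by simp
  qed
  define mp where "mp = real m powr (1 / real n)"
  have mppos: "mp > 0" unfolding mp_def using mpos by simp
  have mpe: "real m powr (1 - 1 / real n) = real m / mp"
    unfolding mp_def using mpos by (simp add: powr_diff)
  have mple: "real m powr (1 - 1 / real n) \<le> real m"
  proof -
    have "real m powr (1 - 1 / real n) \<le> real m powr 1"
      by (rule powr_mono) (use m4 in auto)
    then show ?thesis using mpos by simp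
  qed
  have nlm: "real n * ln (real m) \<le> real m / 16"
  proof -
    have pp: "real m powr (1 - 1 / real n) > 0" using mpos by simp
    have "real n * ln (real m) \<le> real m powr (1 - 1 / real n) / 16"
      using hyp pp by (simp add: divide_simps)
    then show ?thesis using mple by simp
  qed
  have "2 * real n \<le> real m" using m2 by (metis of_nat_le_iff of_nat_mult of_nat_numeral)
  moreover have "3 * real n * ln (real m) = 3 * (real n * ln (real m))" by simp
  ultimately have "real s < real m" using sreal nlm mpos by linarith
  then show sm: "s \<le> m" by simp
  have ratio: "real (s choose a) / real (m choose a) \<le> (real s / real m) ^ a"
    by (rule binom_ratio[OF sm])
  have "2 * n \<le> q * n" using m m2 by simp
  then have q2: "q \<ge> 2" using n2 by simp
  define k where "k = q - 1"
  have k1: "k \<ge> 1" using q2 unfolding k_def by simp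
  have kpos: "real k > 0" using k1 by simp
  have n1: "n \<ge> 1" using n2 by simp
  have ccb: "cc a n k \<le> exp (real a / real n * (1 + ln (real k)))" by (rule cc_bound[OF n1 k1])
  have e1: "exp (real a / real n * (1 + ln (real k))) = exp ((1 + ln (real k)) / real n) ^ a"
    by (simp add: exp_of_nat_mult[symmetric] field_simps)
  have e2: "exp ((1 + ln (real k)) / real n) = exp (1 / real n) * real k powr (1 / real n)"
    using kpos by (simp add: powr_def exp_add[symmetric] add_divide_distrib)
  have e3: "exp (1 / real n) * real k powr (1 / real n) \<le> 2 * mp"
  proof (rule mult_mono)
    have "exp (1 / real n) \<le> exp (1 / 2)" using n2 by (simp add: divide_simps)
    then show "exp (1 / real n) \<le> 2" using exp_half_le2 by linarith
    show "real k powr (1 / real n) \<le> mp" unfolding mp_def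
    proof (rule powr_mono2)
      have "q * 1 \<le> q * n" using n1 by (intro mult_le_mono2)
      then have "k \<le> m" unfolding k_def m by linarith
      then show "real k \<le> real m" by simp
    qed (use kpos in auto)
  qed auto
  have "(exp (1 / real n) * real k powr (1 / real n)) ^ a \<le> (2 * mp) ^ a"
    by (rule power_mono[OF e3]) simp
  then have ccle: "cc a n k \<le> (2 * mp) ^ a" using ccb e1 e2 by simp
  have "real (s choose a) * cc a n (q-1) / real (m choose a)
        = (real (s choose a) / real (m choose a)) * cc a n k" unfolding k_def by simp
  also have "\<dots> \<le> (real s / real m) ^ a * (2 * mp) ^ a"
    by (rule mult_mono[OF ratio ccle]) (use cc_ge1[OF n1, of a k] in auto)
  also have "\<dots> = (real s / real m * (2 * mp)) ^ a" by (simp only: power_mult_distrib)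
  also have "\<dots> \<le> (8 * real n * ln (real m) / real m powr (1 - 1 / real n)) ^ a"
  proof (rule power_mono)
    show "0 \<le> real s / real m * (2 * mp)" using mppos by simp
    have "real s / real m * (2 * mp) = (2 * real s) * mp / real m" by simp
    also have "\<dots> \<le> (8 * real n * ln (real m)) * mp / real m"
      using s4 mppos mpos by (simp add: divide_right_mono)
    also have "\<dots> = 8 * real n * ln (real m) / real m powr (1 - 1 / real n)"
      unfolding mpe using mppos by simp
    finally show "real s / real m * (2 * mp) \<le> 8 * real n * ln (real m) / real m powr (1 - 1 / real n)" .
  qed
  also have "\<dots> \<le> 2 * (8 * real n * ln (real m) / real m powr (1 - 1 / real n)) ^ a"
    using lnpos by simp
  finally show "real (s choose a) * cc a n (q-1) / real (m choose a)
      \<le> 2 * (8 * real n * ln (real m) / real m powr (1 - 1 / real n)) ^ a" .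
qed

lemma decomp:
  assumes iS: "i \<in> S"
  shows "Pi\<^sub>E S T \<inter> {P. Q P} = (\<lambda>(g, y). g(i := y)) ` (SIGMA g:Pi\<^sub>E (S - {i}) T. {y \<in> T i. Q (g(i := y))})"
proof (rule set_eqI, rule iffI)
  fix P assume P: "P \<in> Pi\<^sub>E S T \<inter> {P. Q P}"
  then have PA: "P \<in> Pi\<^sub>E S T" and PQ: "Q P" by auto
  have "P(i := undefined) \<in> Pi\<^sub>E (S - {i}) T"
    using PA by (auto simp: PiE_iff extensional_def)
  moreover have "P i \<in> {y \<in> T i. Q ((P(i := undefined))(i := y))}"
    using PA PQ iS by (auto simp: PiE_iff)
  ultimately have mem: "(P(i := undefined), P i) \<in> (SIGMA g:Pi\<^sub>E (S - {i}) T. {y \<in> T i. Q (g(i := y))})"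
    by blast
  have eqP: "P = (\<lambda>(g, y). g(i := y)) (P(i := undefined), P i)" by simp
  show "P \<in> (\<lambda>(g, y). g(i := y)) ` (SIGMA g:Pi\<^sub>E (S - {i}) T. {y \<in> T i. Q (g(i := y))})"
    using eqP mem by blast
next
  fix P assume "P \<in> (\<lambda>(g, y). g(i := y)) ` (SIGMA g:Pi\<^sub>E (S - {i}) T. {y \<in> T i. Q (g(i := y))})"
  then obtain g y where gy: "g \<in> Pi\<^sub>E (S - {i}) T" "y \<in> T i" "Q (g(i := y))" "P = g(i := y)" by auto
  have "P \<in> Pi\<^sub>E S T" using gy iS by (auto simp: PiE_iff extensional_def)
  then show "P \<in> Pi\<^sub>E S T \<inter> {P. Q P}" using gy by simp
qed


lemma decomp_inj:
  assumes "i \<notin> I"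
  shows "inj_on (\<lambda>(g, y). g(i := y)) (SIGMA g:Pi\<^sub>E I T. B g)"
  unfolding inj_on_def
proof (intro ballI impI)
  fix u v assume u: "u \<in> (SIGMA g:Pi\<^sub>E I T. B g)" and v: "v \<in> (SIGMA g:Pi\<^sub>E I T. B g)"
    and e: "(\<lambda>(g, y). g(i := y)) u = (\<lambda>(g, y). g(i := y)) v"
  obtain g y where ug: "u = (g, y)" by (cases u)
  obtain g' y' where vg: "v = (g', y')" by (cases v)
  have gI: "g \<in> Pi\<^sub>E I T" "g' \<in> Pi\<^sub>E I T" using u v unfolding ug vg by auto
  have e': "g(i := y) = g'(i := y')" using e unfolding ug vg by simp
  have "y = (g(i := y)) i" by simp
  also have "\<dots> = (g'(i := y')) i" using e' by (rule arg_cong)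
  also have "\<dots> = y'" by simp
  finally have yy: "y = y'" .
  have gg: "g = g'"
  proof
    fix j show "g j = g' j"
    proof (cases "j = i")
      case True
      have "g i = undefined" by (rule PiE_arb[OF gI(1) assms])
      moreover have "g' i = undefined" by (rule PiE_arb[OF gI(2) assms])
      ultimately show ?thesis using True by simp
    next
      case False
      have "(g(i := y)) j = (g'(i := y')) j" using e' by (rule arg_cong)
      then show ?thesis using False by simp
    qed
  qed
  show "u = v" unfolding ug vg yy gg ..
qed

lemma mod_ne:
  fixes i n k' :: nat
  assumes "1 \<le> i" "i \<le> n" "i \<le> k'" "k' < i + (n - 1)"
  shows "k' mod n + 1 \<noteq> i"
proof (cases "k' < n")
  case True
  then have "k' mod n = k'" by (rule mod_less)
  then show ?thesis using assms by simp
next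
  case False
  then have "k' mod n = (k' - n) mod n" by (simp add: le_mod_geq)
  also have "\<dots> = k' - n" using assms False by simp
  finally show ?thesis using assms False by simp
qed

lemma count_bound:
  fixes n m q i s :: nat
  assumes n2: "n \<ge> 2" and q0: "q > 0" and m: "m = q * n" and i1: "1 \<le> i" and i2: "i \<le> n"
    and g: "g \<in> Pi\<^sub>E ({1..n} - {i}) (\<lambda>_. permutations_of_set {0..<m})"
  shows "real (card {p \<in> permutations_of_set {0..<m}. rr_worst (g(i:=p)) n m i \<in> lowest p s})
     \<le> real (s choose (n + 1 - i)) * cc (n + 1 - i) n (q-1) / real (m choose (n + 1 - i)) * fact m"
proof -
  define P0 where "P0 = g(i := [0..<m])"
  define F where "F = its P0 n i (n-1)"
  define R0 where "R0 = rr_remaining P0 n m (i-1)"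
  have npos: "n > 0" using n2 by simp
  have prof: "\<forall>j\<in>{1..n}. set ((g(i:=p)) j) = {0..<m}" if "p \<in> permutations_of_set {0..<m}" for p
  proof
    fix j assume j: "j \<in> {1..n}"
    show "set ((g(i:=p)) j) = {0..<m}"
    proof (cases "j = i")
      case True then show ?thesis using that by (simp add: permutations_of_setD)
    next
      case False
      then have "g j \<in> permutations_of_set {0..<m}" using g j by (auto simp: PiE_iff)
      then show ?thesis using False by (simp add: permutations_of_setD)
    qed
  qed
  have p0: "[0..<m] \<in> permutations_of_set {0..<m}" by (rule permutations_of_setI) auto
  have prof0: "\<forall>j\<in>{1..n}. set (P0 j) = {0..<m}" using prof[OF p0] unfolding P0_def .
  have ev: "rr_worst (g(i:=p)) n m i \<in> lowest p s \<longleftrightarrow> walk (replicate (q-1) F) R0 p < s"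
    if p: "p \<in> permutations_of_set {0..<m}" for p
  proof -
    have c: "rr_worst (g(i:=p)) n m i \<in> lowest ((g(i:=p)) i) s \<longleftrightarrow>
         walk (replicate (q-1) (its (g(i:=p)) n i (n-1))) (rr_remaining (g(i:=p)) n m (i-1)) ((g(i:=p)) i) < s"
      by (rule chain_main[OF n2 i1 i2 m q0 prof[OF p]]) (use p in \<open>simp add: permutations_of_setD\<close>)
    have "its (g(i:=p)) n i (n-1) = F"
    proof
      fix Y show "its (g(i:=p)) n i (n-1) Y = F Y" unfolding F_def P0_def
        by (rule its_indep) (use mod_ne[OF i1 i2] in auto)
    qed
    moreover have "rr_remaining (g(i:=p)) n m (i-1) = R0" unfolding R0_def P0_def
      by (rule rem_indep) (use i1 i2 in auto)
    ultimately show ?thesis using c by simp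
  qed
  have seteq: "{p \<in> permutations_of_set {0..<m}. rr_worst (g(i:=p)) n m i \<in> lowest p s}
      = {p \<in> permutations_of_set {0..<m}. walk (replicate (q-1) F) R0 p < s}"
    using ev by auto
  have FP: "F Y \<subseteq> Y \<and> card (F Y) = card Y - (n - 1)" if "Y \<subseteq> {0..<m}" "n - 1 \<le> card Y" for Y
    unfolding F_def using its_sub its_card[OF prof0 npos, of Y "n-1" i] that finite_subset by blast
  have nq: "n \<le> q * n" using q0 by simp
  then have im: "i - 1 \<le> m" using i2 m by linarith
  have R0sub: "R0 \<subseteq> {0..<m}" and R0card: "card R0 = m - (i - 1)"
    unfolding R0_def using rem_sub_card[OF prof0 npos im] by auto
  have "(q-1)*n = q*n - n" by (simp add: diff_mult_distrib)
  moreover note nq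
  ultimately have card2: "card R0 = (n + 1 - i) + (q-1)*n" using R0card m i1 i2 by simp
  have "real (card {p \<in> permutations_of_set {0..<m}. walk (replicate (q-1) F) R0 p < s})
     \<le> real (s choose (n + 1 - i)) * cc (n + 1 - i) n (q-1) / real (card {0..<m} choose (n + 1 - i)) * fact (card {0..<m})"
    by (rule core[of "{0..<m}" n F "n + 1 - i"]) (use FP npos i2 R0sub card2 in auto)
  then show ?thesis using seteq by simp
qed


theorem claim4p9:
  fixes n m q i :: nat
  assumes "n \<ge> 2" and "q > 0" and "m = q * n" and "m \<ge> 2 * n"
    and "real n * ln (real m) / real m powr (1 - 1 / real n) \<le> 1 / 16"
    and "1 \<le> i" and "i \<le> n"
  shows "measure_pmf.prob (pmf_of_set (profiles n m))
           {P. rr_worst P n m i \<in> lowest (P i) (nat \<lceil>3 * real n * ln (real m)\<rceil> + (n - 1))}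
         \<le> 2 * (8 * real n * ln (real m) / real m powr (1 - 1 / real n)) ^ (n + 1 - i)"
proof -
  note n2 = assms(1) and q0 = assms(2) and m = assms(3) and m2 = assms(4) and hyp = assms(5)
    and i1 = assms(6) and i2 = assms(7)
  define s where "s = nat \<lceil>3 * real n * ln (real m)\<rceil> + (n - 1)"
  define a where "a = n + 1 - i"
  define B where "B = real (s choose a) * cc a n (q-1) / real (m choose a)"
  define T where "T = (\<lambda>_::nat. permutations_of_set {0..<m})"
  define I where "I = {1..n} - {i}"
  define A where "A = profiles n m"
  define E where "E = {P. rr_worst P n m i \<in> lowest (P i) s}"
  define G where "G g = {p \<in> permutations_of_set {0..<m}. rr_worst (g(i:=p)) n m i \<in> lowest p s}" for g
  have iI: "i \<notin> I" unfolding I_def by simp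
  have ins: "{1..n} = insert i I" unfolding I_def using i1 i2 by auto
  have AT: "A = Pi\<^sub>E {1..n} T" unfolding A_def profiles_def T_def ..
  have finA: "finite A" unfolding AT T_def by (rule finite_PiE) auto
  have p0: "[0..<m] \<in> permutations_of_set {0..<m}" by (rule permutations_of_setI) auto
  have Tne: "\<forall>j. T j \<noteq> {}" unfolding T_def using p0 by auto
  have Ane: "A \<noteq> {}" unfolding AT using Tne by (simp add: PiE_eq_empty_iff)
  have cT: "card (T j) = fact m" for j unfolding T_def by simp
  have cardA: "card A = fact m ^ n" unfolding AT using cT by (simp add: card_PiE)
  have cI: "card I = n - 1" unfolding I_def using i1 i2 by (simp add: card_Diff_singleton)
  have cardI: "card (Pi\<^sub>E I T) = fact m ^ (n - 1)" using cT cI by (simp add: card_PiE I_def)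
  have finI: "finite (Pi\<^sub>E I T)" unfolding T_def by (rule finite_PiE) (auto simp: I_def)
  have Gs: "G g = {y \<in> T i. (\<lambda>P. rr_worst P n m i \<in> lowest (P i) s) (g(i := y))}" for g
    unfolding G_def T_def by simp
  have EQ: "E = {P. (\<lambda>P. rr_worst P n m i \<in> lowest (P i) s) P}" unfolding E_def by simp
  have img: "A \<inter> E = (\<lambda>(g, y). g(i := y)) ` (SIGMA g:Pi\<^sub>E I T. G g)"
    unfolding AT EQ Gs I_def by (rule decomp) (use i1 i2 in simp)
  have inj: "inj_on (\<lambda>(g, y). g(i := y)) (SIGMA g:Pi\<^sub>E I T. G g)"
    by (rule decomp_inj[OF iI])
  have "card (A \<inter> E) = card (SIGMA g:Pi\<^sub>E I T. G g)" unfolding img by (rule card_image[OF inj])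
  also have "\<dots> = (\<Sum>g\<in>Pi\<^sub>E I T. card (G g))"
    by (rule card_SigmaI) (use finI in \<open>auto simp: G_def\<close>)
  finally have cAE: "real (card (A \<inter> E)) = (\<Sum>g\<in>Pi\<^sub>E I T. real (card (G g)))" by simp
  have Gb: "real (card (G g)) \<le> B * fact m" if "g \<in> Pi\<^sub>E I T" for g
    unfolding G_def B_def a_def
    using count_bound[OF n2 q0 m i1 i2, of g s] that unfolding I_def T_def by simp
  have "real (card (A \<inter> E)) \<le> (\<Sum>g\<in>Pi\<^sub>E I T. B * fact m)"
    unfolding cAE by (rule sum_mono) (rule Gb)
  also have "\<dots> = real (fact m ^ (n - 1)) * (B * fact m)" using cardI by simp
  finally have le1: "real (card (A \<inter> E)) \<le> real (fact m ^ (n - 1)) * (B * fact m)" .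
  have n1: "n = Suc (n - 1)" using n2 by simp
  have fpos: "real (fact m ^ (n - 1)) * fact m > 0" by simp
  have "measure_pmf.prob (pmf_of_set A) E = real (card (A \<inter> E)) / real (card A)"
    by (rule measure_pmf_of_set[OF Ane finA])
  also have "\<dots> \<le> real (fact m ^ (n - 1)) * (B * fact m) / real (card A)"
    by (rule divide_right_mono[OF le1]) simp
  also have "real (card A) = real (fact m ^ (n - 1)) * fact m"
    unfolding cardA by (subst n1) (simp add: algebra_simps)
  also have "real (fact m ^ (n - 1)) * (B * fact m) / (real (fact m ^ (n - 1)) * fact m) = B"
    using fpos by (simp add: field_simps)
  also have "B \<le> 2 * (8 * real n * ln (real m) / real m powr (1 - 1 / real n)) ^ (n + 1 - i)"
    unfolding B_def s_def a_def by (rule final_arith(2)[OF n2 q0 m m2 hyp i1 i2])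
  finally show ?thesis unfolding A_def E_def s_def .
qed

end
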